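(* Let $d\ge2$, $U_0$ a non-empty bounded Borel subset of $\mathbb{R}^d$, $U_1=\mathbb{R}^d\setminus U_0$. For $x\in\mathbb{R}^d$ and integers $\ell'>\ell$ set $\beta'=\frac{1}{|B(x,2^{-\ell})|}\int_{B(x,2^{-\ell})}\widehat\sigma_{\ell'}(y)\,dy$. Then for every $0\le\delta\le\beta'\wedge(1-\beta')$ at least one of the following holds: (i) $\mu_{x,\ell}(\{\widehat\sigma_{\ell'}>\beta'+\delta\})\ge\frac\delta2$ and $\mu_{x,\ell}(\{\widehat\sigma_{\ell'}<\beta'-\delta\})\ge\frac\delta2$; (ii) $\mu_{x,\ell}(\{\beta'-\delta\le\widehat\sigma_{\ell'}\le\beta'+\delta\})\ge\frac14-\frac\delta2$.
   Context: $B(x,r)$ is the closed sup-norm ball, $|\cdot|$ Lebesgue measure, $\widehat\sigma_\ell(x)=|B(x,2^{-\ell})\cap U_1|/|B(x,2^{-\ell})|$, and $\mu_{x,\ell}(dy)=|B(x,2^{-\ell})|^{-1}1_{B(x,2^{-\ell})}(y)\,dy$ is normalized Lebesgue measure on $B(x,2^{-\ell})$. *)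

theory Defs
  imports "HOL-Analysis.Analysis" "HOL-Probability.Probability"
begin

definition sup_ball :: "real^'n \<Rightarrow> real \<Rightarrow> (real^'n) set" where
  "sup_ball x r = {y. \<forall>i. \<bar>y $ i - x $ i\<bar> \<le> r}"

definition sigma_hat :: "(real^'n) set \<Rightarrow> int \<Rightarrow> real^'n \<Rightarrow> real" where
  "sigma_hat U0 l x =
     measure lebesgue (sup_ball x (2 powr (- real_of_int l)) \<inter> (UNIV - U0))
     / measure lebesgue (sup_ball x (2 powr (- real_of_int l)))"

definition mu_ball :: "real^'n \<Rightarrow> int \<Rightarrow> (real^'n) measure" where
  "mu_ball x l = uniform_measure lebesgue (sup_ball x (2 powr (- real_of_int l)))"

end

theory Submission
  imports Defs
begin

lemma arith_core:
  fixes a m c \<beta> \<delta> :: real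
  assumes s: "a + m + c = 1" and nn: "a \<ge> 0" "m \<ge> 0" "c \<ge> 0"
    and d: "0 \<le> \<delta>" "\<delta> \<le> \<beta>" "\<delta> \<le> 1 - \<beta>"
    and up: "\<beta> \<le> a + (\<beta>+\<delta>)*m + (\<beta>-\<delta>)*c"
    and lo: "(\<beta>+\<delta>)*a + (\<beta>-\<delta>)*m \<le> \<beta>"
  shows "(a \<ge> \<delta>/2 \<and> c \<ge> \<delta>/2) \<or> m \<ge> 1/4 - \<delta>/2"
proof (cases "\<delta> = 0")
  case True then show ?thesis using nn by auto
next
  case False
  hence dp: "\<delta> > 0" using d by auto
  show ?thesis
  proof (rule ccontr)
    assume H: "\<not> ?thesis"
    hence m: "m < 1/4 - \<delta>/2" by auto
    show False
    proof (cases "a < \<delta>/2")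
      case True
      have "\<beta> * (a+m+c) \<le> a + (\<beta>+\<delta>)*m + (\<beta>-\<delta>)*c" using up s by simp
      hence "c*\<delta> \<le> a*(1-\<beta>) + m*\<delta>" by (simp add: algebra_simps)
      also have "a*(1-\<beta>) \<le> (\<delta>/2)*(1-\<beta>)" using True d by (intro mult_right_mono) auto
      finally have "c*\<delta> \<le> ((1-\<beta>)/2 + m) * \<delta>" by (simp add: algebra_simps)
      hence "c \<le> (1-\<beta>)/2 + m" using dp by simp
      then show False using s m True d dp by argo
    next
      case False
      hence c: "c < \<delta>/2" using H by auto
      have "(\<beta>+\<delta>)*a + (\<beta>-\<delta>)*m \<le> \<beta> * (a+m+c)" using lo s by simp
      hence "a*\<delta> \<le> \<beta>*c + m*\<delta>" by (simp add: algebra_simps)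
      also have "\<beta>*c \<le> \<beta>*(\<delta>/2)" using c d by (intro mult_left_mono) auto
      finally have "a*\<delta> \<le> (\<beta>/2 + m) * \<delta>" by (simp add: algebra_simps)
      hence "a \<le> \<beta>/2 + m" using dp by simp
      then show False using s m c d dp by argo
    qed
  qed
qed
lemma meas_ball:
  fixes V :: "(real^'n) set" assumes V: "V \<in> sets borel"
  shows "(\<lambda>y. measure lebesgue (sup_ball y r \<inter> V)) \<in> borel_measurable borel"
proof -
  define Q where "Q = {p::((real^'n) \<times> (real^'n)). snd p \<in> V \<and> (\<forall>i. \<bar>snd p $ i - fst p $ i\<bar> \<le> r)}"
  have c: "closed {p::((real^'n) \<times> (real^'n)). \<forall>i. \<bar>snd p $ i - fst p $ i\<bar> \<le> r}"
    by (intro closed_Collect_all closed_Collect_le continuous_intros)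
  have sm: "snd \<in> borel_measurable (borel :: ((real^'n) \<times> (real^'n)) measure)"
    by (intro borel_measurable_continuous_onI continuous_intros)
  have "snd -` V \<inter> space borel \<in> sets (borel :: ((real^'n) \<times> (real^'n)) measure)"
    using measurable_sets[OF sm] V by simp
  moreover have "Q = (snd -` V \<inter> space borel) \<inter> {p::((real^'n) \<times> (real^'n)). \<forall>i. \<bar>snd p $ i - fst p $ i\<bar> \<le> r}"
    unfolding Q_def by (simp add: set_eq_iff)
  ultimately have "Q \<in> sets borel" using c borel_closed sets.Int by blast
  hence "Q \<in> sets (borel \<Otimes>\<^sub>M lborel)"
  proof -
    have "sets (borel \<Otimes>\<^sub>M lborel) = sets (borel \<Otimes>\<^sub>M (borel :: (real^'n) measure))"
      by (rule sets_pair_measure_cong) simp_all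
    moreover have "(borel \<Otimes>\<^sub>M borel) = (borel :: ((real^'n) \<times> (real^'n)) measure)" by (rule borel_prod)
    ultimately show ?thesis using \<open>Q \<in> sets borel\<close> by metis
  qed
  from lborel.measurable_emeasure_Pair[OF this]
  have "(\<lambda>y. enn2real (emeasure lborel (Pair y -` Q))) \<in> borel_measurable borel" by (rule borel_measurable_enn2real)
  moreover have "Pair y -` Q = sup_ball y r \<inter> V" for y
    unfolding Q_def sup_ball_def by (auto simp: abs_minus_commute)
  moreover have "sup_ball y r \<inter> V \<in> sets lborel" for y
  proof -
    have "sup_ball y r = {z. \<forall>i. \<bar>z $ i - y $ i\<bar> \<le> r}" by (simp add: sup_ball_def)
    moreover have "{z::real^'n. \<forall>i. \<bar>z $ i - y $ i\<bar> \<le> r} \<in> sets borel" by measurable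
    ultimately show ?thesis using V by auto
  qed
  ultimately show ?thesis by (simp add: measure_def)
qed


lemma sup_ball_cbox: "sup_ball (y::real^'n) s = cbox (\<chi> i. y$i - s) (\<chi> i. y$i + s)"
  unfolding sup_ball_def by (auto simp: mem_box_cart abs_diff_le_iff)

lemma sup_ball_sets: "sup_ball (y::real^'n) s \<in> sets lborel"
  by (simp add: sup_ball_cbox)

lemma sup_ball_fin: "emeasure lebesgue (sup_ball (y::real^'n) s) < \<infinity>"
  using sup_ball_sets[of y s] by (simp add: sup_ball_cbox emeasure_lborel_cbox_eq)

lemma sup_ball_pos: "s > 0 \<Longrightarrow> measure lebesgue (sup_ball (y::real^'n) s) > 0"
proof -
  assume s: "s > 0"
  have ne: "cbox (\<chi> i. y$i - s) (\<chi> i. y$i + s) \<noteq> {}"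
    using s by (auto simp: interval_ne_empty_cart)
  have "measure lebesgue (sup_ball y s) = Henstock_Kurzweil_Integration.content (cbox (\<chi> i. y$i - s) (\<chi> i. y$i + s))"
    using sup_ball_sets[of y s] by (simp add: sup_ball_cbox)
  also have "\<dots> = (\<Prod>i\<in>(UNIV :: 'n set). 2 * s)"
    using content_cbox_cart[OF ne] by simp
  also have "\<dots> > 0" using s by (intro prod_pos) auto
  finally show ?thesis .
qed

lemma sigma_hat_meas: "sigma_hat U0 l' \<in> borel_measurable borel" if "U0 \<in> sets borel"
proof -
  have 1: "(\<lambda>y. measure lebesgue (sup_ball y (2 powr (- real_of_int l')) \<inter> (UNIV - U0))) \<in> borel_measurable borel"
    by (rule meas_ball) (use that in auto)
  have 2: "(\<lambda>y. measure lebesgue (sup_ball y (2 powr (- real_of_int l')) \<inter> UNIV)) \<in> borel_measurable borel"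
    by (rule meas_ball) auto
  show ?thesis unfolding sigma_hat_def[abs_def] using borel_measurable_divide[OF 1 2] by simp
qed

lemma sigma_hat_bounds: "0 \<le> sigma_hat U0 l' y \<and> sigma_hat U0 l' y \<le> 1" if "U0 \<in> sets borel"
proof -
  let ?S = "sup_ball y (2 powr (- real_of_int l'))"
  have "?S \<in> fmeasurable lebesgue"
    using sup_ball_sets[of y] sup_ball_fin[of y] by (auto simp: fmeasurable_def)
  moreover have "?S \<inter> (UNIV - U0) \<in> sets lebesgue"
    using sup_ball_sets[of y] that by auto
  ultimately have "measure lebesgue (?S \<inter> (UNIV - U0)) \<le> measure lebesgue ?S"
    by (intro measure_mono_fmeasurable) auto
  then show ?thesis unfolding sigma_hat_def
    by (cases "measure lebesgue ?S = 0") (auto simp: divide_le_eq_1 less_le)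
qed

theorem lemma1p2:
  fixes U0 :: "(real^'n) set" and x :: "real^'n" and l l' :: int and \<delta> :: real
  assumes "CARD('n) \<ge> 2"
    and "U0 \<in> sets borel" and "bounded U0" and "U0 \<noteq> {}"
    and "l' > l"
  defines "\<beta> \<equiv> (1 / measure lebesgue (sup_ball x (2 powr (- real_of_int l))))
            * (LINT y : sup_ball x (2 powr (- real_of_int l)) | lebesgue. sigma_hat U0 l' y)"
  assumes "0 \<le> \<delta>" and "\<delta> \<le> min \<beta> (1 - \<beta>)"
  shows "(measure (mu_ball x l) {y. sigma_hat U0 l' y > \<beta> + \<delta>} \<ge> \<delta> / 2 \<and>
          measure (mu_ball x l) {y. sigma_hat U0 l' y < \<beta> - \<delta>} \<ge> \<delta> / 2)
       \<or> measure (mu_ball x l) {y. \<beta> - \<delta> \<le> sigma_hat U0 l' y \<and> sigma_hat U0 l' y \<le> \<beta> + \<delta>}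
           \<ge> 1 / 4 - \<delta> / 2"
proof -
  define B where "B = sup_ball x (2 powr (- real_of_int l))"
  define f where "f = sigma_hat U0 l'"
  define mB where "mB = measure lebesgue B"
  define A where "A = {y. f y > \<beta> + \<delta>}"
  define C where "C = {y. f y < \<beta> - \<delta>}"
  define M where "M = {y. \<beta> - \<delta> \<le> f y \<and> f y \<le> \<beta> + \<delta>}"
  have fm[measurable]: "f \<in> borel_measurable borel" unfolding f_def using sigma_hat_meas assms(2) .
  have fb: "0 \<le> f y" "f y \<le> 1" for y unfolding f_def using sigma_hat_bounds assms(2) by auto
  have fml: "f \<in> borel_measurable lebesgue"
    using fm by (simp add: measurable_completion)
  have mBp: "mB > 0" unfolding mB_def B_def by (rule sup_ball_pos) simp
  have Bs: "B \<in> sets lborel" unfolding B_def by (rule sup_ball_sets)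
  have Bl: "B \<in> sets lebesgue" using Bs by auto
  have Bfin: "emeasure lebesgue B < \<infinity>" unfolding B_def by (rule sup_ball_fin)
  have eB: "emeasure lebesgue B = ennreal mB" unfolding mB_def
    using Bfin by (simp add: emeasure_eq_ennreal_measure)
  have As: "A \<in> sets borel" unfolding A_def by measurable
  have Cs: "C \<in> sets borel" unfolding C_def by measurable
  have Ms: "M \<in> sets borel" unfolding M_def by measurable
  have setsl: "S \<in> sets borel \<Longrightarrow> B \<inter> S \<in> sets lebesgue" for S using Bl by auto
  have finl: "S \<in> sets borel \<Longrightarrow> emeasure lebesgue (B \<inter> S) < \<infinity>" for S
    using Bfin setsl[of S] Bl by (meson emeasure_mono inf_le1 le_less_trans)
  have intI: "S \<in> sets borel \<Longrightarrow> integrable lebesgue (indicator (B \<inter> S) :: _ \<Rightarrow> real)" for S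
    using setsl finl by auto
  have intS: "S \<in> sets borel \<Longrightarrow> integral\<^sup>L lebesgue (indicator (B \<inter> S) :: _ \<Rightarrow> real) = measure lebesgue (B \<inter> S)" for S
    by simp
  have muS: "S \<in> sets borel \<Longrightarrow> measure (mu_ball x l) S = measure lebesgue (B \<inter> S) / mB" for S
    unfolding mu_ball_def B_def[symmetric] mB_def
    using eB mBp Bfin by (subst measure_uniform_measure) auto
  define a where "a = measure lebesgue (B \<inter> A) / mB"
  define m where "m = measure lebesgue (B \<inter> M) / mB"
  define c where "c = measure lebesgue (B \<inter> C) / mB"
  have intB: "integrable lebesgue (indicator B :: _ \<Rightarrow> real)" using Bl Bfin by auto
  have intf: "integrable lebesgue (\<lambda>y. indicator B y * f y)"
    by (rule Bochner_Integration.integrable_bound[OF intB]) (use Bl fml fb in \<open>auto simp: indicator_def\<close>)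
  define I where "I = integral\<^sup>L lebesgue (\<lambda>y. indicator B y * f y)"
  have \<beta>I: "\<beta> = I / mB"
    unfolding \<beta>_def I_def mB_def B_def[symmetric] f_def set_lebesgue_integral_def by simp
  have part: "indicator B y = indicator (B \<inter> A) y + indicator (B \<inter> M) y + (indicator (B \<inter> C) y :: real)" for y
    unfolding A_def M_def C_def indicator_def using \<open>0 \<le> \<delta>\<close> by auto
  have sumB: "mB = measure lebesgue (B \<inter> A) + measure lebesgue (B \<inter> M) + measure lebesgue (B \<inter> C)"
  proof -
    have "mB = integral\<^sup>L lebesgue (indicator B :: _ \<Rightarrow> real)" unfolding mB_def by simp
    also have "\<dots> = integral\<^sup>L lebesgue (\<lambda>y. indicator (B \<inter> A) y + indicator (B \<inter> M) y + (indicator (B \<inter> C) y :: real))"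
      by (rule arg_cong[where f="integral\<^sup>L lebesgue"]) (simp add: part fun_eq_iff)
    also have "\<dots> = measure lebesgue (B \<inter> A) + measure lebesgue (B \<inter> M) + measure lebesgue (B \<inter> C)"
      using intI[OF As] intI[OF Ms] intI[OF Cs] by (simp add: intS As Ms Cs)
    finally show ?thesis .
  qed
  have up: "I \<le> measure lebesgue (B \<inter> A) + (\<beta>+\<delta>) * measure lebesgue (B \<inter> M) + (\<beta>-\<delta>) * measure lebesgue (B \<inter> C)"
  proof -
    have "I \<le> integral\<^sup>L lebesgue (\<lambda>y. indicator (B \<inter> A) y + (\<beta>+\<delta>) * indicator (B \<inter> M) y + (\<beta>-\<delta>) * (indicator (B \<inter> C) y :: real))"
      unfolding I_def
    proof (rule integral_mono[OF intf])
      show "integrable lebesgue (\<lambda>y. indicator (B \<inter> A) y + (\<beta>+\<delta>) * indicator (B \<inter> M) y + (\<beta>-\<delta>) * (indicator (B \<inter> C) y :: real))"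
        using intI[OF As] intI[OF Ms] intI[OF Cs] by simp
      show "indicator B y * f y \<le> indicator (B \<inter> A) y + (\<beta>+\<delta>) * indicator (B \<inter> M) y + (\<beta>-\<delta>) * (indicator (B \<inter> C) y :: real)" for y
        using fb[of y] by (auto simp: A_def M_def C_def indicator_def)
    qed
    also have "\<dots> = measure lebesgue (B \<inter> A) + (\<beta>+\<delta>) * measure lebesgue (B \<inter> M) + (\<beta>-\<delta>) * measure lebesgue (B \<inter> C)"
      using intI[OF As] intI[OF Ms] intI[OF Cs] by (simp add: As Ms Cs)
    finally show ?thesis .
  qed
  have lo: "(\<beta>+\<delta>) * measure lebesgue (B \<inter> A) + (\<beta>-\<delta>) * measure lebesgue (B \<inter> M) \<le> I"
  proof -
    have "integral\<^sup>L lebesgue (\<lambda>y. (\<beta>+\<delta>) * indicator (B \<inter> A) y + (\<beta>-\<delta>) * (indicator (B \<inter> M) y :: real)) \<le> I"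
      unfolding I_def
    proof (rule integral_mono[OF _ intf])
      show "integrable lebesgue (\<lambda>y. (\<beta>+\<delta>) * indicator (B \<inter> A) y + (\<beta>-\<delta>) * (indicator (B \<inter> M) y :: real))"
        using intI[OF As] intI[OF Ms] by simp
      show "(\<beta>+\<delta>) * indicator (B \<inter> A) y + (\<beta>-\<delta>) * (indicator (B \<inter> M) y :: real) \<le> indicator B y * f y" for y
        using fb[of y] by (auto simp: A_def M_def C_def indicator_def)
    qed
    moreover have "integral\<^sup>L lebesgue (\<lambda>y. (\<beta>+\<delta>) * indicator (B \<inter> A) y + (\<beta>-\<delta>) * (indicator (B \<inter> M) y :: real))
        = (\<beta>+\<delta>) * measure lebesgue (B \<inter> A) + (\<beta>-\<delta>) * measure lebesgue (B \<inter> M)"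
      using intI[OF As] intI[OF Ms] by (simp add: As Ms)
    ultimately show ?thesis by simp
  qed
  have s1: "a + m + c = 1"
  proof -
    have "a + m + c = (measure lebesgue (B \<inter> A) + measure lebesgue (B \<inter> M) + measure lebesgue (B \<inter> C)) / mB"
      unfolding a_def m_def c_def by (simp add: add_divide_distrib)
    also have "\<dots> = mB / mB" using sumB by simp
    also have "\<dots> = 1" using mBp by simp
    finally show ?thesis .
  qed
  have nn: "a \<ge> 0" "m \<ge> 0" "c \<ge> 0" unfolding a_def m_def c_def using mBp by auto
  have up0: "I/mB \<le> a + (\<beta>+\<delta>)*m + (\<beta>-\<delta>)*c"
  proof -
    have "I/mB \<le> (measure lebesgue (B \<inter> A) + (\<beta>+\<delta>) * measure lebesgue (B \<inter> M) + (\<beta>-\<delta>) * measure lebesgue (B \<inter> C))/mB"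
      using up by (rule divide_right_mono) (use mBp in auto)
    also have "\<dots> = a + (\<beta>+\<delta>)*m + (\<beta>-\<delta>)*c"
      unfolding a_def m_def c_def by (simp add: add_divide_distrib)
    finally show ?thesis .
  qed
  have lo0: "(\<beta>+\<delta>)*a + (\<beta>-\<delta>)*m \<le> I/mB"
  proof -
    have "(\<beta>+\<delta>)*a + (\<beta>-\<delta>)*m = ((\<beta>+\<delta>) * measure lebesgue (B \<inter> A) + (\<beta>-\<delta>) * measure lebesgue (B \<inter> M))/mB"
      unfolding a_def m_def by (simp add: add_divide_distrib)
    also have "\<dots> \<le> I/mB"
      using lo by (rule divide_right_mono) (use mBp in auto)
    finally show ?thesis .
  qed
  have up': "\<beta> \<le> a + (\<beta>+\<delta>)*m + (\<beta>-\<delta>)*c" using up0 \<beta>I by simp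
  have lo': "(\<beta>+\<delta>)*a + (\<beta>-\<delta>)*m \<le> \<beta>" using lo0 \<beta>I by simp
  have res: "(a \<ge> \<delta>/2 \<and> c \<ge> \<delta>/2) \<or> m \<ge> 1/4 - \<delta>/2"
    by (rule arith_core[OF s1 nn _ _ _ up' lo']) (use \<open>0 \<le> \<delta>\<close> \<open>\<delta> \<le> min \<beta> (1 - \<beta>)\<close> in auto)
  show ?thesis
    using res muS[OF As] muS[OF Cs] muS[OF Ms]
    unfolding a_def m_def c_def A_def C_def M_def f_def by simp
qed

end
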